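(* Let $n\le N$ be positive integers and $r>0$. Let $\mathcal G_1,\mathcal G_2$ be nonempty families of subsets of $[N]$, each member having at most $n$ elements, and suppose both $\mathcal G_1$ and $\mathcal G_2$ are $r$-spread. If $r\ge 2^{12}\log_2(2n)$, then there exist $G_1\in\mathcal G_1$ and $G_2\in\mathcal G_2$ with $G_1\cap G_2=\emptyset$.
   Context: A family $\mathcal G$ of subsets of $[N]$ is $r$-spread if for every $S\subseteq[N]$, $|\{G\in\mathcal G: S\subseteq G\}|\le r^{-|S|}|\mathcal G|$. *)

theory Defs
  imports Complex_Main
begin

definition r_spread :: "nat \<Rightarrow> real \<Rightarrow> nat set set \<Rightarrow> bool" where
  "r_spread N r \<G> \<longleftrightarrow>
     (\<forall>S. S \<subseteq> {1..N} \<longrightarrow>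
        real (card {G \<in> \<G>. S \<subseteq> G}) \<le> r powi (- int (card S)) * real (card \<G>))"

end

theory Submission
  imports Defs
begin

lemma binom_step: "(n choose Suc k) * Suc k = (n choose k) * (n - k)"
proof (cases n)
  case 0 then show ?thesis by simp
next
  case (Suc m) then show ?thesis
    using Suc_times_binomial[of k m] binomial_absorb_comp[of n k] by (simp add: mult.commute)
qed

lemma binom_ratio:
  assumes "w \<ge> 1"
  shows "real (M choose (w+j)) \<le> real (M choose w) * (real M / real w)^j"
proof (induction j)
  case 0 then show ?case by simp
next
  case (Suc j)
  have e: "real (M choose Suc (w+j)) * real (Suc (w+j)) = real (M choose (w+j)) * real (M - (w+j))"
    using binom_step[of M "w+j"] by (metis of_nat_mult)
  have "real (M - (w+j)) \<le> real M" by simp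
  hence "real (M choose Suc (w+j)) * real (Suc (w+j)) \<le> real (M choose (w+j)) * real M"
    using e by (metis mult_left_mono of_nat_0_le_iff)
  hence a: "real (M choose Suc (w+j)) \<le> real (M choose (w+j)) * real M / real (Suc (w+j))"
    by (simp add: field_simps)
  have "real (M choose (w+j)) * real M / real (Suc (w+j)) \<le> real (M choose (w+j)) * real M / real w"
    using assms by (intro divide_left_mono) auto
  also have "\<dots> \<le> (real (M choose w) * (real M / real w)^j) * real M / real w"
    by (intro divide_right_mono mult_right_mono Suc.IH) auto
  also have "\<dots> = real (M choose w) * (real M / real w)^Suc j" by simp
  finally show ?case using a by simp
qed

lemma geo_bound:
  fixes q :: real
  assumes "0 \<le> q" "q \<le> 1/2"
  shows "(\<Sum>j=t..k. q^j) \<le> 2 * q^t"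
proof -
  have "q \<noteq> 1" using assms by auto
  have "(\<Sum>j=t..k. q^j) \<le> q^t / (1 - q)"
    using assms by (auto simp: sum_gp divide_right_mono)
  also have "\<dots> \<le> 2 * q^t"
  proof -
    have "(2*q) * q^t \<le> 1 * q^t" using assms by (intro mult_right_mono) auto
    thus ?thesis using assms by (simp add: field_simps)
  qed
  finally show ?thesis .
qed

definition spr :: "real \<Rightarrow> 'i set \<Rightarrow> ('i \<Rightarrow> 'a set) \<Rightarrow> bool" where
  "spr \<kappa> I A \<longleftrightarrow> (\<forall>T. real (card {i\<in>I. T \<subseteq> A i}) * \<kappa> ^ card T \<le> real (card I))"

definition fragP :: "'i set \<Rightarrow> ('i \<Rightarrow> 'a set) \<Rightarrow> nat \<Rightarrow> 'a set \<Rightarrow> 'i \<Rightarrow> 'a set \<Rightarrow> bool" where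
  "fragP I A k W i T \<longleftrightarrow> T \<inter> W = {} \<and> T \<subseteq> A i \<and> (\<exists>i'\<in>I. card (A i') \<le> k \<and> A i' \<subseteq> W \<union> T)
     \<and> (\<forall>i''\<in>I. card (A i'') \<le> k \<and> A i'' \<subseteq> W \<union> A i \<longrightarrow> card T \<le> card (A i'' - W))"

definition frag :: "'i set \<Rightarrow> ('i \<Rightarrow> 'a set) \<Rightarrow> nat \<Rightarrow> 'a set \<Rightarrow> 'i \<Rightarrow> 'a set" where
  "frag I A k W i = (SOME T. fragP I A k W i T)"

lemma frag_ex:
  assumes "i \<in> I" "card (A i) \<le> k"
  shows "\<exists>T. fragP I A k W i T"
proof -
  let ?C = "\<lambda>x. x \<in> I \<and> card (A x) \<le> k \<and> A x \<subseteq> W \<union> A i"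
  have "?C i" using assms by auto
  then obtain i' where i': "?C i'" and mn: "\<forall>y. ?C y \<longrightarrow> card (A i' - W) \<le> card (A y - W)"
    using ex_has_least_nat[of ?C i "\<lambda>x. card (A x - W)"] by blast
  have "fragP I A k W i (A i' - W)"
    unfolding fragP_def using i' mn by blast
  thus ?thesis by blast
qed

lemma frag:
  assumes "i \<in> I" "card (A i) \<le> k"
  shows "fragP I A k W i (frag I A k W i)"
  unfolding frag_def using frag_ex[of i I A k W, OF assms] by (rule someI_ex)

lemma fragP_D:
  assumes "fragP I A k W i T"
  shows "T \<inter> W = {}" "T \<subseteq> A i" "\<exists>i'\<in>I. card (A i') \<le> k \<and> A i' \<subseteq> W \<union> T"
  using assms unfolding fragP_def by auto

lemma frag_key:
  assumes "fragP I A k W i T" "\<forall>x\<in>I. finite (A x)" "i \<in> I" "i'' \<in> I" "card (A i'') \<le> k"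
    "A i'' \<subseteq> W \<union> T"
  shows "A i'' - W = T"
proof -
  have T: "T \<inter> W = {}" "T \<subseteq> A i" using assms(1) unfolding fragP_def by auto
  have "A i'' \<subseteq> W \<union> A i" using T assms(6) by auto
  hence c: "card T \<le> card (A i'' - W)" using assms(1,4,5) unfolding fragP_def by auto
  have s: "A i'' - W \<subseteq> T" using assms(6) by auto
  have "finite T" using T(2) assms(2,3) finite_subset by blast
  thus ?thesis using card_seteq[OF _ s c] by blast
qed

lemma round_bound:
  fixes A :: "'i \<Rightarrow> 'a set" and \<kappa> :: real
  assumes X: "finite X" and I: "finite I" and AX: "\<forall>i\<in>I. A i \<subseteq> X" and sp: "spr \<kappa> I A"
    and \<kappa>: "\<kappa> > 0" and XN: "card X \<le> N" and w: "w \<ge> 1" and kt: "k < 2*t"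
  shows "real (card {(W,i). W \<subseteq> X \<and> card W = w \<and> i \<in> I \<and> card (A i) \<le> k \<and> t \<le> card (frag I A k W i)})
     \<le> (\<Sum>j=t..k. (4*real N/(real w*\<kappa>))^j) * real (card X choose w) * real (card I)"
proof -
  define P where "P = {(W,i). W \<subseteq> X \<and> card W = w \<and> i \<in> I \<and> card (A i) \<le> k \<and> t \<le> card (frag I A k W i)}"
  define \<Phi> where "\<Phi> Z = A (SOME i. i \<in> I \<and> card (A i) \<le> k \<and> A i \<subseteq> Z)" for Z
  define Zs where "Zs j = {Z. Z \<subseteq> X \<and> card Z = w + j \<and> (\<exists>i\<in>I. card (A i) \<le> k \<and> A i \<subseteq> Z)}" for j
  define Ts where "Ts Z j = {T. T \<subseteq> \<Phi> Z \<and> card T = j}" for Z j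
  define Q where "Q j = (SIGMA Z:Zs j. SIGMA T:Ts Z j. {i\<in>I. T \<subseteq> A i})" for j
  define f where "f = (\<lambda>(W,i). (W \<union> frag I A k W i, frag I A k W i, i))"
  have finA: "\<forall>x\<in>I. finite (A x)" using AX X finite_subset by blast
  have \<Phi>: "\<Phi> Z \<subseteq> X \<and> card (\<Phi> Z) \<le> k \<and> \<Phi> Z \<subseteq> Z" if "Z \<in> Zs j" for Z j
  proof -
    have "\<exists>i. i \<in> I \<and> card (A i) \<le> k \<and> A i \<subseteq> Z" using that unfolding Zs_def by blast
    from someI_ex[OF this] show ?thesis unfolding \<Phi>_def using AX by blast
  qed
  have inj: "inj_on f P"
  proof (rule inj_onI)
    fix a b assume a: "a \<in> P" and b: "b \<in> P" and e: "f a = f b"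
    obtain W i where ai: "a = (W,i)" by (cases a)
    obtain W' i' where bi: "b = (W',i')" by (cases b)
    have "i \<in> I" "card (A i) \<le> k" using a ai by (simp_all add: P_def)
    hence fa: "fragP I A k W i (frag I A k W i)" by (rule frag)
    have "i' \<in> I" "card (A i') \<le> k" using b bi by (simp_all add: P_def)
    hence fb: "fragP I A k W' i' (frag I A k W' i')" by (rule frag)
    have e1: "W \<union> frag I A k W i = W' \<union> frag I A k W' i'" and e2: "frag I A k W i = frag I A k W' i'"
      and e3: "i = i'" using e unfolding ai bi f_def by auto
    have "W = (W \<union> frag I A k W i) - frag I A k W i" using fragP_D(1)[OF fa] by blast
    also have "\<dots> = (W' \<union> frag I A k W' i') - frag I A k W' i'" using e1 e2 by simp
    also have "\<dots> = W'" using fragP_D(1)[OF fb] by blast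
    finally show "a = b" using ai bi e3 by simp
  qed
  have img: "f ` P \<subseteq> (\<Union>j\<in>{t..k}. Q j)"
  proof
    fix y assume "y \<in> f ` P"
    then obtain p where p: "p \<in> P" "y = f p" by (rule imageE)
    obtain W i where pe: "p = (W,i)" by (cases p)
    have Wi: "(W,i) \<in> P" and y: "y = f (W,i)" using p pe by simp_all
    define T where "T = frag I A k W i"
    have W: "W \<subseteq> X" "card W = w" "i \<in> I" "card (A i) \<le> k" "t \<le> card T"
      using Wi unfolding P_def T_def by simp_all
    have fT: "fragP I A k W i T" unfolding T_def using W(3,4) by (rule frag)
    note TW = fragP_D[OF fT]
    have finT: "finite T" using TW(2) finA W(3) finite_subset by blast
    have finW: "finite W" using W(1) X finite_subset by blast
    have jk: "card T \<le> k" using card_mono[OF _ TW(2)] finA W(3,4) by fastforce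
    have cZ: "card (W \<union> T) = w + card T" using card_Un_disjoint[OF finW finT] TW(1) W(2) by auto
    have ZX: "W \<union> T \<subseteq> X" using W(1) TW(2) AX W(3) by blast
    have Zin: "W \<union> T \<in> Zs (card T)" unfolding Zs_def using cZ ZX TW(3) by simp
    have "\<exists>x. x \<in> I \<and> card (A x) \<le> k \<and> A x \<subseteq> W \<union> T" using TW(3) by blast
    from someI_ex[OF this] obtain i0 where i0: "i0 = (SOME x. x \<in> I \<and> card (A x) \<le> k \<and> A x \<subseteq> W \<union> T)"
      "i0 \<in> I" "card (A i0) \<le> k" "A i0 \<subseteq> W \<union> T" by blast
    have "A i0 - W = T" using frag_key[OF fT finA W(3) i0(2,3,4)] .
    hence "T \<subseteq> \<Phi> (W \<union> T)" unfolding \<Phi>_def i0(1)[symmetric] by blast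
    hence TT: "T \<in> Ts (W \<union> T) (card T)" unfolding Ts_def by simp
    have "f (W,i) = (W \<union> T, T, i)" unfolding f_def T_def by simp
    hence "y \<in> Q (card T)" unfolding Q_def y using Zin TT W(3) TW(2) by simp
    thus "y \<in> (\<Union>j\<in>{t..k}. Q j)" using W(5) jk by auto
  qed
  have finZs: "finite (Zs j)" for j
    by (rule finite_subset[of _ "Pow X"]) (auto simp: Zs_def X)
  have finTs: "finite (Ts Z j)" if "Z \<in> Zs j" for Z j
  proof -
    have "finite (\<Phi> Z)" using \<Phi>[OF that] X finite_subset by blast
    thus ?thesis by (intro finite_subset[of "Ts Z j" "Pow (\<Phi> Z)"]) (auto simp: Ts_def)
  qed
  have finQ: "finite (Q j)" for j
    unfolding Q_def using finZs finTs I by (auto intro!: finite_SigmaI)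
  have "card P \<le> card (\<Union>j\<in>{t..k}. Q j)"
    by (rule card_inj_on_le[OF inj img]) (auto intro: finQ)
  also have "\<dots> \<le> (\<Sum>j=t..k. card (Q j))" by (rule card_UN_le) simp
  finally have cP: "real (card P) \<le> (\<Sum>j=t..k. real (card (Q j)))"
    by (metis of_nat_le_iff of_nat_sum)
  have Qb: "real (card (Q j)) \<le> (4*real N/(real w*\<kappa>))^j * real (card X choose w) * real (card I)"
    if j: "j \<in> {t..k}" for j
  proof -
    have sp1: "real (card {i\<in>I. T \<subseteq> A i}) \<le> real (card I) / \<kappa>^j" if "T \<in> Ts Z j" for T Z
    proof -
      have "real (card {i\<in>I. T \<subseteq> A i}) * \<kappa>^j \<le> real (card I)"
        using sp that unfolding spr_def Ts_def by auto
      thus ?thesis using \<kappa> by (simp add: field_simps)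
    qed
    have cTs: "real (card (Ts Z j)) \<le> 2^k" if "Z \<in> Zs j" for Z
    proof -
      have "finite (\<Phi> Z)" using \<Phi>[OF that] X finite_subset by blast
      hence "card (Ts Z j) = card (\<Phi> Z) choose j" unfolding Ts_def by (rule n_subsets)
      also have "\<dots> \<le> 2 ^ card (\<Phi> Z)" by (rule binomial_le_pow2)
      also have "\<dots> \<le> 2 ^ k" using \<Phi>[OF that] by (intro power_increasing) auto
      finally show ?thesis by (metis of_nat_le_iff of_nat_numeral of_nat_power)
    qed
    have "card (Q j) = (\<Sum>Z\<in>Zs j. \<Sum>T\<in>Ts Z j. card {i\<in>I. T \<subseteq> A i})"
      unfolding Q_def using finZs finTs I by (simp add: card_SigmaI finite_SigmaI)
    hence "real (card (Q j)) = (\<Sum>Z\<in>Zs j. \<Sum>T\<in>Ts Z j. real (card {i\<in>I. T \<subseteq> A i}))" by simp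
    also have "\<dots> \<le> (\<Sum>Z\<in>Zs j. \<Sum>T\<in>Ts Z j. real (card I) / \<kappa>^j)"
      by (intro sum_mono sp1) auto
    also have "\<dots> = (\<Sum>Z\<in>Zs j. real (card (Ts Z j)) * (real (card I) / \<kappa>^j))" by simp
    also have "\<dots> \<le> (\<Sum>Z\<in>Zs j. 2^k * (real (card I) / \<kappa>^j))"
      using \<kappa> by (intro sum_mono mult_right_mono cTs) auto
    also have "\<dots> = real (card (Zs j)) * 2^k * (real (card I) / \<kappa>^j)" by simp
    also have "\<dots> \<le> real (card X choose (w+j)) * 2^k * (real (card I) / \<kappa>^j)"
    proof -
      have "Zs j \<subseteq> {Z. Z \<subseteq> X \<and> card Z = w + j}" unfolding Zs_def by blast
      hence "card (Zs j) \<le> card X choose (w+j)"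
        using card_mono[of "{Z. Z \<subseteq> X \<and> card Z = w + j}" "Zs j"] n_subsets[OF X, of "w+j"] X by simp
      thus ?thesis using \<kappa> by (intro mult_right_mono) auto
    qed
    also have "\<dots> \<le> (real (card X choose w) * (real (card X) / real w)^j) * 4^j * (real (card I) / \<kappa>^j)"
    proof -
      have "(2::real)^k \<le> 2^(2*j)" using j kt by (intro power_increasing) auto
      also have "\<dots> = 4^j" by (simp add: power_mult)
      finally have "(2::real)^k \<le> 4^j" .
      thus ?thesis using \<kappa> binom_ratio[OF w, of "card X" j]
        by (intro mult_right_mono mult_mono) auto
    qed
    also have "\<dots> \<le> (real (card X choose w) * (real N / real w)^j) * 4^j * (real (card I) / \<kappa>^j)"
    proof -
      have "(real (card X)/real w)^j \<le> (real N/real w)^j"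
        using XN by (intro power_mono divide_right_mono) auto
      hence h: "real (card X choose w) * (real (card X)/real w)^j \<le> real (card X choose w) * (real N/real w)^j"
        by (rule mult_left_mono) simp
      have "0 \<le> (4::real)^j" "0 \<le> real (card I) / \<kappa>^j" using \<kappa> by auto
      from mult_right_mono[OF mult_right_mono[OF h this(1)] this(2)] show ?thesis .
    qed
    also have "\<dots> = (4*real N/(real w*\<kappa>))^j * real (card X choose w) * real (card I)"
    proof -
      have "real w > 0" using w by simp
      thus ?thesis using \<kappa> by (simp add: power_divide power_mult_distrib)
    qed
    finally show ?thesis .
  qed
  have "real (card P) \<le> (\<Sum>j=t..k. (4*real N/(real w*\<kappa>))^j * real (card X choose w) * real (card I))"
  proof -
    have "(\<Sum>j=t..k. real (card (Q j))) \<le> (\<Sum>j=t..k. (4*real N/(real w*\<kappa>))^j * real (card X choose w) * real (card I))"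
      by (rule sum_mono) (rule Qb)
    thus ?thesis using cP by linarith
  qed
  also have "\<dots> = (\<Sum>j=t..k. (4*real N/(real w*\<kappa>))^j) * real (card X choose w) * real (card I)"
    by (simp add: sum_distrib_right)
  finally show ?thesis unfolding P_def .
qed

lemma main_claim:
  fixes I :: "'i set" and \<kappa> q :: real and N w :: nat and A :: "'i \<Rightarrow> 'a set"
  assumes I: "finite I" and \<kappa>: "\<kappa> > 0" and w: "w \<ge> 1" and q: "q = 4*real N/(real w*\<kappa>)"
    and q2: "q \<le> 1/2"
  shows "finite X \<Longrightarrow> (\<forall>i\<in>I. A i \<subseteq> X) \<Longrightarrow> spr \<kappa> I A \<Longrightarrow> card X \<le> N \<Longrightarrow>
    real (card {(Y,i). Y \<subseteq> X \<and> card Y = L*w \<and> i \<in> I \<and> card (A i) < 2^L \<and> \<not>(\<exists>i'\<in>I. A i' \<subseteq> Y)})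
     \<le> 4*q*(1 - 1/2^L) * real (card X choose (L*w)) * real (card I)"
proof (induction L arbitrary: X A)
  case 0
  define noA where "noA Y \<longleftrightarrow> \<not>(\<exists>i'\<in>I. A i' \<subseteq> Y)" for Y
  have E: "{(Y,i). Y \<subseteq> X \<and> card Y = 0*w \<and> i \<in> I \<and> card (A i) < 2^0 \<and> noA Y} = {}"
  proof (rule ccontr)
    assume "{(Y,i). Y \<subseteq> X \<and> card Y = 0*w \<and> i \<in> I \<and> card (A i) < 2^0 \<and> noA Y} \<noteq> {}"
    then obtain p where p: "p \<in> {(Y,i). Y \<subseteq> X \<and> card Y = 0*w \<and> i \<in> I \<and> card (A i) < 2^0 \<and> noA Y}"
      by blast
    obtain Y i where pe: "p = (Y,i)" by (cases p)
    have Yi: "i \<in> I" "card (A i) = 0" "noA Y" using p unfolding pe by simp_all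
    have "finite (A i)" using 0(1,2) Yi(1) finite_subset by blast
    hence "A i \<subseteq> Y" using Yi(2) by simp
    thus False using Yi(1,3) unfolding noA_def by blast
  qed
  have E': "{(Y,i). Y \<subseteq> X \<and> card Y = 0*w \<and> i \<in> I \<and> card (A i) < 2^0 \<and> \<not>(\<exists>i'\<in>I. A i' \<subseteq> Y)} = {}"
    using E unfolding noA_def .
  show ?case unfolding E' by simp
next
  case (Suc L)
  note X = Suc.prems(1) and AX = Suc.prems(2) and sp = Suc.prems(3) and XN = Suc.prems(4)
  define m where "m = L*w"
  define k :: nat where "k = 2^(Suc L) - 1"
  define t :: nat where "t = 2^L"
  have kt: "k < 2*t" unfolding k_def t_def by simp
  have p2: "(0::nat) < 2^Suc L" by simp
  have kk: "card (A i) < 2^Suc L \<longleftrightarrow> card (A i) \<le> k" for i unfolding k_def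
    using p2 by linarith
  have kk': "card (A i) < 2*2^L \<longleftrightarrow> card (A i) \<le> k" for i using kk[of i] by simp
  have q0: "q \<ge> 0" using q \<kappa> by simp
  define noA where "noA Y \<longleftrightarrow> \<not>(\<exists>i'\<in>I. A i' \<subseteq> Y)" for Y
  define Bad where "Bad = {(Y,i). Y \<subseteq> X \<and> card Y = Suc L * w \<and> i \<in> I \<and> card (A i) < 2^Suc L \<and> noA Y}"
  have SLw: "Suc L * w = w + m" unfolding m_def by simp
  show ?case
  proof (cases "w + m \<le> card X")
    case False
    have "Bad = {}"
    proof (rule ccontr)
      assume "Bad \<noteq> {}"
      then obtain Y i where Y: "Y \<subseteq> X" "card Y = w + m" unfolding Bad_def SLw by auto
      have "card Y \<le> card X" by (rule card_mono[OF X Y(1)])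
      thus False using False Y(2) by linarith
    qed
    have "(1::real) \<le> 2^Suc L" by (rule one_le_power) simp
    hence h: "0 \<le> 1 - 1/(2::real)^Suc L" by (simp add: divide_le_eq_1)
    have "0 \<le> 4*q*(1 - 1/(2::real)^Suc L) * real (card X choose (Suc L * w)) * real (card I)"
      using q0 h by (intro mult_nonneg_nonneg) auto
    thus ?thesis unfolding noA_def[symmetric] Bad_def[symmetric] using \<open>Bad = {}\<close> by simp
  next
    case True
    define M where "M = card X"
    define B where "B W i = (if card (A i) \<le> k then frag I A k W i else A i - W)" for W i
    define Trip where "Trip = {(W,Y',i). W \<subseteq> X \<and> card W = w \<and> Y' \<subseteq> X - W \<and> card Y' = m \<and> i \<in> I \<and> card (A i) \<le> k \<and> noA (W \<union> Y')}"
    define RB where "RB = {(W,i). W \<subseteq> X \<and> card W = w \<and> i \<in> I \<and> card (A i) \<le> k \<and> t \<le> card (frag I A k W i)}"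
    define Ws where "Ws = {W. W \<subseteq> X \<and> card W = w}"
    define noB where "noB W Y \<longleftrightarrow> \<not>(\<exists>i'\<in>I. B W i' \<subseteq> Y)" for W Y
    define G where "G W = {(Y',i). Y' \<subseteq> X - W \<and> card Y' = L*w \<and> i \<in> I \<and> card (B W i) < 2^L \<and> noB W Y'}" for W
    define R1 where "R1 = (\<lambda>((W,i),Y'). (W,Y',i)) ` (SIGMA p:RB. {Y'. Y' \<subseteq> X - fst p \<and> card Y' = m})"
    define R2 where "R2 = (SIGMA W:Ws. G W)"
    have finG: "finite (G W)" for W
      by (rule finite_subset[of _ "Pow X \<times> I"]) (auto simp: G_def X I)
    have finA: "\<forall>x\<in>I. finite (A x)" using AX X finite_subset by blast
    have Bsub: "B W i \<subseteq> A i - W" if "i \<in> I" for W i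
    proof (cases "card (A i) \<le> k")
      case True
      note fr = fragP_D[OF frag[of i I A k W, OF that True]]
      show ?thesis using fr(1,2) True unfolding B_def by auto
    next
      case False thus ?thesis unfolding B_def by auto
    qed
    have Bcov: "\<exists>i''\<in>I. A i'' \<subseteq> W \<union> B W i" if "i \<in> I" for W i
    proof (cases "card (A i) \<le> k")
      case True
      note fr = fragP_D[OF frag[of i I A k W, OF that True]]
      show ?thesis using fr(3) True unfolding B_def by auto
    next
      case False thus ?thesis unfolding B_def using that by auto
    qed
    have finTrip: "finite Trip"
      by (rule finite_subset[of _ "Pow X \<times> Pow X \<times> I"]) (auto simp: Trip_def X I)
    define S where "S = (SIGMA p:Bad. {W. W \<subseteq> fst p \<and> card W = w})"
    define g :: "('a set \<times> 'i) \<times> 'a set \<Rightarrow> 'a set \<times> 'a set \<times> 'i" where "g = (\<lambda>(p,W). (W, fst p - W, snd p))"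
    have finBad: "finite Bad"
      by (rule finite_subset[of _ "Pow X \<times> I"]) (auto simp: Bad_def X I)
    have cS: "card S = card Bad * ((w+m) choose w)"
    proof -
      have "card S = (\<Sum>p\<in>Bad. card {W. W \<subseteq> fst p \<and> card W = w})"
      proof -
        have fb: "finite {W. W \<subseteq> fst p \<and> card W = w}" if "p \<in> Bad" for p
        proof -
          obtain Y i where pe: "p = (Y,i)" by (cases p)
          have "fst p \<subseteq> X" using that unfolding pe by (simp add: Bad_def)
          hence "finite (fst p)" using X finite_subset by blast
          thus ?thesis using finite_subset[of "{W. W \<subseteq> fst p \<and> card W = w}" "Pow (fst p)"] by auto
        qed
        show ?thesis unfolding S_def using finBad fb by (intro card_SigmaI) auto
      qed
      also have "\<dots> = (\<Sum>p\<in>Bad. (w+m) choose w)"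
      proof (rule sum.cong)
        fix p assume pB: "p \<in> Bad"
        obtain Y i where pe: "p = (Y,i)" by (cases p)
        have "fst p \<subseteq> X" "card (fst p) = w + m" using pB unfolding pe by (simp_all add: Bad_def m_def)
        moreover have "finite (fst p)" using \<open>fst p \<subseteq> X\<close> X finite_subset by blast
        ultimately show "card {W. W \<subseteq> fst p \<and> card W = w} = (w+m) choose w" using n_subsets by metis
      qed simp
      finally show ?thesis by simp
    qed
    have injg: "inj_on g S"
    proof (rule inj_onI)
      fix a b assume a: "a \<in> S" and b: "b \<in> S" and e: "g a = g b"
      obtain Y i W where ai: "a = ((Y,i),W)" by (metis prod.collapse)
      obtain Y' i' W' where bi: "b = ((Y',i'),W')" by (metis prod.collapse)
      have "W \<subseteq> Y" using a ai unfolding S_def by auto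
      moreover have "W' \<subseteq> Y'" using b bi unfolding S_def by auto
      moreover have "W = W'" "Y - W = Y' - W'" "i = i'" using e unfolding ai bi g_def by auto
      ultimately have "Y = Y'" by blast
      thus "a = b" using ai bi \<open>W = W'\<close> \<open>i = i'\<close> by simp
    qed
    have imgg: "g ` S \<subseteq> Trip"
    proof
      fix z assume "z \<in> g ` S"
      then obtain a where a: "a \<in> S" "z = g a" by (rule imageE)
      obtain Y i W where ai: "a = ((Y,i),W)" by (metis prod.collapse)
      have Y: "Y \<subseteq> X" "card Y = w + m" "i \<in> I" "card (A i) \<le> k" "noA Y"
        and WY: "W \<subseteq> Y" "card W = w"
        using a(1) unfolding ai S_def Bad_def by (simp_all add: kk' m_def)
      have finY: "finite Y" using Y(1) X finite_subset by blast
      have "card (Y - W) = m" using card_Diff_subset[OF finite_subset[OF WY(1) finY] WY(1)] Y(2) WY(2) by simp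
      moreover have "W \<union> (Y - W) = Y" using WY by blast
      moreover have "W \<subseteq> X" "Y - W \<subseteq> X - W" using Y(1) WY(1) by blast+
      ultimately show "z \<in> Trip" unfolding a(2) ai g_def Trip_def using Y WY by simp
    qed
    have ca: "card Bad * ((w+m) choose w) \<le> card Trip"
      using card_inj_on_le[OF injg imgg finTrip] cS by simp
    have sub: "Trip \<subseteq> R1 \<union> R2"
    proof
      fix z assume z: "z \<in> Trip"
      obtain W Y' i where zi: "z = (W,Y',i)" by (metis prod.collapse)
      have Z: "W \<subseteq> X" "card W = w" "Y' \<subseteq> X - W" "card Y' = m" "i \<in> I" "card (A i) \<le> k"
        "noA (W \<union> Y')" using z unfolding zi Trip_def by simp_all
      show "z \<in> R1 \<union> R2"
      proof (cases "t \<le> card (frag I A k W i)")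
        case True
        hence "(W,i) \<in> RB" unfolding RB_def using Z by simp
        hence "((W,i),Y') \<in> (SIGMA p:RB. {Y'. Y' \<subseteq> X - fst p \<and> card Y' = m})" using Z by simp
        hence "(\<lambda>((W,i),Y'). (W,Y',i)) ((W,i),Y') \<in> R1" unfolding R1_def by (rule imageI)
        thus ?thesis unfolding zi by simp
      next
        case False
        have "card (B W i) < 2^L" using False Z(6) unfolding B_def t_def by simp
        moreover have "noB W Y'"
          unfolding noB_def
        proof
          assume "\<exists>i'\<in>I. B W i' \<subseteq> Y'"
          then obtain i' where "i' \<in> I" "B W i' \<subseteq> Y'" by blast
          moreover obtain i'' where "i'' \<in> I" "A i'' \<subseteq> W \<union> B W i'" using Bcov[OF \<open>i' \<in> I\<close>] by blast
          ultimately show False using Z(7) unfolding noA_def by blast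
        qed
        ultimately have "(Y',i) \<in> G W" unfolding G_def using Z by (simp add: m_def)
        moreover have "W \<in> Ws" unfolding Ws_def using Z by simp
        ultimately show ?thesis unfolding zi R2_def by simp
      qed
    qed
    have finWs: "finite Ws" by (rule finite_subset[of _ "Pow X"]) (auto simp: Ws_def X)
    have finRB: "finite RB" by (rule finite_subset[of _ "Pow X \<times> I"]) (auto simp: RB_def X I)
    have cW: "card (X - W) = M - w" if "W \<in> Ws" for W
    proof -
      have "W \<subseteq> X" "card W = w" using that unfolding Ws_def by simp_all
      moreover have "finite W" using \<open>W \<subseteq> X\<close> X finite_subset by blast
      ultimately show ?thesis unfolding M_def using card_Diff_subset by metis
    qed
    have "card R1 \<le> card (SIGMA p:RB. {Y'. Y' \<subseteq> X - fst p \<and> card Y' = m})"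
      unfolding R1_def by (rule card_image_le) (use finRB X in \<open>auto intro!: finite_SigmaI\<close>)
    also have "\<dots> = (\<Sum>p\<in>RB. card {Y'. Y' \<subseteq> X - fst p \<and> card Y' = m})"
      using finRB X by (intro card_SigmaI) auto
    also have "\<dots> = (\<Sum>p\<in>RB. (M - w) choose m)"
    proof (rule sum.cong)
      fix p assume "p \<in> RB"
      hence "fst p \<in> Ws" unfolding RB_def Ws_def by auto
      thus "card {Y'. Y' \<subseteq> X - fst p \<and> card Y' = m} = (M - w) choose m"
        using n_subsets[of "X - fst p" m] X cW by simp
    qed simp
    also have "\<dots> = card RB * ((M - w) choose m)" by simp
    finally have "card R1 \<le> card RB * ((M - w) choose m)" .
    hence cR1: "real (card R1) \<le> real (card RB) * real ((M - w) choose m)"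
      by (simp only: of_nat_mult[symmetric] of_nat_le_iff)
    have "real (card RB) \<le> (\<Sum>j=t..k. (4*real N/(real w*\<kappa>))^j) * real (card X choose w) * real (card I)"
      unfolding RB_def by (rule round_bound[OF X I AX sp \<kappa> XN w kt])
    also have "\<dots> \<le> (4*q/2^Suc L) * real (M choose w) * real (card I)"
    proof -
      have "(\<Sum>j=t..k. (4*real N/(real w*\<kappa>))^j) \<le> 2 * q^t"
        unfolding q[symmetric] using geo_bound[OF q0 q2] by blast
      also have "\<dots> \<le> 2 * q^(Suc L)"
      proof -
        have "Suc L \<le> t" unfolding t_def by (induction L) auto
        thus ?thesis using q0 q2 by (intro mult_left_mono power_decreasing) auto
      qed
      also have "\<dots> = 2 * q * q^L" by simp
      also have "\<dots> \<le> 2 * q * (1/2)^L" using q0 q2 by (intro mult_left_mono power_mono) auto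
      also have "\<dots> = 4*q/2^Suc L" by (simp add: power_one_over)
      finally show ?thesis unfolding M_def by (intro mult_right_mono) auto
    qed
    finally have cRB: "real (card RB) \<le> (4*q/2^Suc L) * real (M choose w) * real (card I)" .
    have cG: "real (card (G W)) \<le> 4*q*(1 - 1/2^L) * real ((M - w) choose m) * real (card I)"
      if W: "W \<in> Ws" for W
    proof -
      have "finite (X - W)" using X by simp
      moreover have "\<forall>i\<in>I. B W i \<subseteq> X - W" using Bsub AX by blast
      moreover have "spr \<kappa> I (B W)"
        unfolding spr_def
      proof
        fix T
        have "card {i\<in>I. T \<subseteq> B W i} \<le> card {i\<in>I. T \<subseteq> A i}"
          using I Bsub by (intro card_mono) auto
        hence "real (card {i\<in>I. T \<subseteq> B W i}) * \<kappa> ^ card T \<le> real (card {i\<in>I. T \<subseteq> A i}) * \<kappa> ^ card T"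
          using \<kappa> by (intro mult_right_mono) auto
        also have "\<dots> \<le> real (card I)" using sp unfolding spr_def by blast
        finally show "real (card {i\<in>I. T \<subseteq> B W i}) * \<kappa> ^ card T \<le> real (card I)" .
      qed
      moreover have "card (X - W) \<le> N" using XN card_Diff_subset X by (meson Diff_subset card_mono le_trans)
      ultimately have "real (card {(Y,i). Y \<subseteq> X - W \<and> card Y = L*w \<and> i \<in> I \<and> card (B W i) < 2^L \<and> \<not>(\<exists>i'\<in>I. B W i' \<subseteq> Y)})
         \<le> 4*q*(1 - 1/2^L) * real (card (X - W) choose (L*w)) * real (card I)"
        by (rule Suc.IH)
      thus ?thesis unfolding G_def m_def noB_def[symmetric] using cW[OF W] by simp
    qed
    have "card R2 = (\<Sum>W\<in>Ws. card (G W))"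
    proof -
      show ?thesis using finG unfolding R2_def using finWs by (intro card_SigmaI) auto
    qed
    hence "real (card R2) = (\<Sum>W\<in>Ws. real (card (G W)))" by simp
    also have "\<dots> \<le> (\<Sum>W\<in>Ws. 4*q*(1 - 1/2^L) * real ((M - w) choose m) * real (card I))"
      by (intro sum_mono cG)
    also have "\<dots> = real (M choose w) * (4*q*(1 - 1/2^L) * real ((M - w) choose m) * real (card I))"
      using n_subsets[OF X, of w] unfolding Ws_def M_def by simp
    finally have cR2: "real (card R2) \<le> real (M choose w) * (4*q*(1 - 1/2^L) * real ((M - w) choose m) * real (card I))" .
    have "card Trip \<le> card (R1 \<union> R2)"
      by (rule card_mono) (use sub in \<open>auto simp: R1_def R2_def finRB finWs finG X intro!: finite_SigmaI finite_imageI\<close>)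
    also have "\<dots> \<le> card R1 + card R2" by (rule card_Un_le)
    finally have "card Bad * ((w+m) choose w) \<le> card R1 + card R2" using ca by linarith
    hence "real (card Bad) * real ((w+m) choose w) \<le> real (card R1) + real (card R2)"
      by (simp only: of_nat_mult[symmetric] of_nat_add[symmetric] of_nat_le_iff)
    also have "\<dots> \<le> (4*q/2^Suc L) * real (M choose w) * real (card I) * real ((M - w) choose m)
        + real (M choose w) * (4*q*(1 - 1/2^L) * real ((M - w) choose m) * real (card I))"
    proof -
      have "real (card RB) * real ((M - w) choose m) \<le> (4*q/2^Suc L) * real (M choose w) * real (card I) * real ((M - w) choose m)"
        using cRB by (rule mult_right_mono) simp
      thus ?thesis using cR1 cR2 by linarith
    qed
    also have "\<dots> = (4*q/2^Suc L + 4*q*(1 - 1/2^L)) * (real (M choose w) * real ((M - w) choose m)) * real (card I)"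
      by (simp add: algebra_simps)
    also have "4*q/2^Suc L + 4*q*(1 - 1/2^L) = 4*q*(1 - 1/2^Suc L)"
      by (simp add: field_simps)
    also have "real (M choose w) * real ((M - w) choose m) = real (M choose (w+m)) * real ((w+m) choose w)"
    proof -
      have "(M choose (w+m)) * ((w+m) choose w) = (M choose w) * ((M - w) choose (w + m - w))"
        using True unfolding M_def by (intro choose_mult) auto
      thus ?thesis by (simp only: of_nat_mult[symmetric] add_diff_cancel_left')
    qed
    finally have fin: "real (card Bad) * real ((w+m) choose w) \<le> (4*q*(1 - 1/2^Suc L) * real (M choose (w+m)) * real (card I)) * real ((w+m) choose w)"
      by (simp add: algebra_simps)
    have "real ((w+m) choose w) > 0" by simp
    hence "real (card Bad) \<le> 4*q*(1 - 1/2^Suc L) * real (M choose (w+m)) * real (card I)"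
      using fin by (meson mult_le_cancel_right_pos)
    thus ?thesis unfolding Bad_def M_def SLw noA_def .
  qed
qed

lemma spr_of_r_spread:
  assumes "r_spread N r \<G>" "\<forall>G\<in>\<G>. G \<subseteq> {1..N}" "r > 0"
  shows "spr r \<G> (\<lambda>G. G)"
  unfolding spr_def
proof
  fix T :: "nat set"
  show "real (card {G\<in>\<G>. T \<subseteq> G}) * r ^ card T \<le> real (card \<G>)"
  proof (cases "T \<subseteq> {1..N}")
    case True
    hence "real (card {G\<in>\<G>. T \<subseteq> G}) \<le> r powi (- int (card T)) * real (card \<G>)"
      using assms(1) unfolding r_spread_def by blast
    also have "\<dots> = real (card \<G>) / r ^ card T"
      by (simp add: power_int_minus field_simps)
    finally show ?thesis using assms(3) by (simp add: field_simps)
  next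
    case False
    hence e: "{G\<in>\<G>. T \<subseteq> G} = {}" using assms(2) by blast
    show ?thesis unfolding e by simp
  qed
qed

lemma size_bound:
  assumes sp: "spr r \<G> (\<lambda>G. G)" and sub: "\<forall>G\<in>\<G>. G \<subseteq> {1..N}" and r: "r \<ge> 8"
    and G: "G \<in> \<G>"
  shows "3 * card G \<le> N"
proof -
  have fin: "finite \<G>" by (rule finite_subset[of _ "Pow {1..N}"]) (use sub in auto)
  have "card \<G> \<le> card (Pow {1..(N::nat)})" by (rule card_mono) (use sub in auto)
  hence cG: "card \<G> \<le> 2^N" by (simp add: card_Pow)
  have "G \<in> {H\<in>\<G>. G \<subseteq> H}" using G by simp
  hence "1 \<le> card {H\<in>\<G>. G \<subseteq> H}" using fin by (metis (no_types, lifting) card_0_eq empty_iff finite_subset less_one mem_Collect_eq not_le subsetI)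
  hence "1 * r ^ card G \<le> real (card {H\<in>\<G>. G \<subseteq> H}) * r ^ card G"
    using r by (intro mult_right_mono) auto
  also have "\<dots> \<le> real (card \<G>)" using sp unfolding spr_def by blast
  also have "\<dots> \<le> 2^N" using cG by (metis of_nat_le_iff of_nat_numeral of_nat_power)
  finally have a: "r ^ card G \<le> 2^N" by simp
  have "(2::real)^(3 * card G) = 8 ^ card G" by (simp add: power_mult)
  also have "\<dots> \<le> r ^ card G" using r by (intro power_mono) auto
  finally have "(2::real)^(3 * card G) \<le> 2^N" using a by linarith
  thus ?thesis by simp
qed

lemma few_bad:
  fixes \<G> :: "nat set set"
  assumes sp: "spr r \<G> (\<lambda>G. G)" and sub: "\<forall>G\<in>\<G>. G \<subseteq> {1..N}" and ne: "\<G> \<noteq> {}"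
    and sz: "\<forall>G\<in>\<G>. card G < 2^L" and r: "r > 0" and w: "w \<ge> 1"
    and q: "q = 4*real N/(real w*r)" and q2: "q \<le> 1/2"
  shows "real (card {Y. Y \<subseteq> {1..N} \<and> card Y = L*w \<and> \<not>(\<exists>G\<in>\<G>. G \<subseteq> Y)}) \<le> 4*q * real (N choose (L*w))"
proof -
  have fin: "finite \<G>" by (rule finite_subset[of _ "Pow {1..N}"]) (use sub in auto)
  define Bad where "Bad = {Y. Y \<subseteq> {1..N} \<and> card Y = L*w \<and> \<not>(\<exists>G\<in>\<G>. G \<subseteq> Y)}"
  have A: "real (card {(Y,i). Y \<subseteq> {1..N} \<and> card Y = L*w \<and> i \<in> \<G> \<and> card i < 2^L \<and> \<not>(\<exists>i'\<in>\<G>. i' \<subseteq> Y)})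
     \<le> 4*q*(1 - 1/2^L) * real (card {1..N} choose (L*w)) * real (card \<G>)"
    by (rule main_claim[OF fin r w q q2]) (use sub sp in auto)
  have e: "{(Y,i). Y \<subseteq> {1..N} \<and> card Y = L*w \<and> i \<in> \<G> \<and> card i < 2^L \<and> \<not>(\<exists>i'\<in>\<G>. i' \<subseteq> Y)} = Bad \<times> \<G>"
    unfolding Bad_def using sz by auto
  have "real (card Bad) * real (card \<G>) \<le> 4*q*(1 - 1/2^L) * real (N choose (L*w)) * real (card \<G>)"
    using A unfolding e card_cartesian_product of_nat_mult by simp
  moreover have "real (card \<G>) > 0" using fin ne by (simp add: card_gt_0_iff)
  ultimately have "real (card Bad) \<le> 4*q*(1 - 1/2^L) * real (N choose (L*w))"
    by (meson mult_le_cancel_right_pos)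
  also have "\<dots> \<le> 4*q * real (N choose (L*w))"
  proof -
    have "q \<ge> 0" using q r by simp
    moreover have "0 \<le> 1/(2::real)^L" by simp
    ultimately show ?thesis by (intro mult_right_mono) (auto simp: mult_left_le)
  qed
  finally show ?thesis unfolding Bad_def .
qed

lemma pair_count:
  fixes X :: "nat set" and Bad1 Bad2 :: "nat set set"
  assumes X: "finite X" and cX: "card X = N" and m: "2*m \<le> N"
    and B1: "Bad1 \<subseteq> {Y. Y \<subseteq> X \<and> card Y = m}" and B2: "Bad2 \<subseteq> {Y. Y \<subseteq> X \<and> card Y = m}"
    and lt: "card Bad1 + card Bad2 < N choose m"
  shows "\<exists>Y Y'. Y \<subseteq> X \<and> card Y = m \<and> Y' \<subseteq> X - Y \<and> card Y' = m \<and> Y \<notin> Bad1 \<and> Y' \<notin> Bad2"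
proof (rule ccontr)
  assume na: "\<not> ?thesis"
  define Ms where "Ms = {Y. Y \<subseteq> X \<and> card Y = m}"
  define Sub where "Sub Y = {Y'. Y' \<subseteq> X - Y \<and> card Y' = m}" for Y
  define P where "P = (SIGMA Y:Ms. Sub Y)"
  define P1 where "P1 = (SIGMA Y:Bad1. Sub Y)"
  define P2 where "P2 = (\<lambda>(a,b). (b,a)) ` (SIGMA Y:Bad2. Sub Y)"
  have finMs: "finite Ms" unfolding Ms_def using X by simp
  have finSub: "finite (Sub Y)" for Y unfolding Sub_def using X by simp
  have cSub: "card (Sub Y) = (N - m) choose m" if "Y \<in> Ms" for Y
  proof -
    have "Y \<subseteq> X" "card Y = m" using that unfolding Ms_def by simp_all
    hence "card (X - Y) = N - m" using cX X by (simp add: card_Diff_subset finite_subset)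
    thus ?thesis unfolding Sub_def using n_subsets[of "X - Y" m] X by simp
  qed
  have finB1: "finite Bad1" using B1 finMs unfolding Ms_def by (rule finite_subset)
  have finB2: "finite Bad2" using B2 finMs unfolding Ms_def by (rule finite_subset)
  have cP: "card P = (N choose m) * ((N - m) choose m)"
  proof -
    have "card P = (\<Sum>Y\<in>Ms. card (Sub Y))" unfolding P_def using finMs finSub by (intro card_SigmaI) auto
    also have "\<dots> = (\<Sum>Y\<in>Ms. (N - m) choose m)" using cSub by (intro sum.cong) auto
    also have "\<dots> = card Ms * ((N - m) choose m)" by simp
    also have "card Ms = N choose m" unfolding Ms_def using n_subsets[OF X, of m] cX by simp
    finally show ?thesis .
  qed
  have cP1: "card P1 = card Bad1 * ((N - m) choose m)"
  proof -
    have "card P1 = (\<Sum>Y\<in>Bad1. card (Sub Y))" unfolding P1_def using finB1 finSub by (intro card_SigmaI) auto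
    also have "\<dots> = (\<Sum>Y\<in>Bad1. (N - m) choose m)" using cSub B1 unfolding Ms_def by (intro sum.cong) auto
    finally show ?thesis by simp
  qed
  have cP2: "card P2 \<le> card Bad2 * ((N - m) choose m)"
  proof -
    have "card P2 \<le> card (SIGMA Y:Bad2. Sub Y)" unfolding P2_def by (rule card_image_le) (use finB2 finSub in auto)
    also have "\<dots> = (\<Sum>Y\<in>Bad2. card (Sub Y))" using finB2 finSub by (intro card_SigmaI) auto
    also have "\<dots> = (\<Sum>Y\<in>Bad2. (N - m) choose m)" using cSub B2 unfolding Ms_def by (intro sum.cong) auto
    finally show ?thesis by simp
  qed
  have sub: "P \<subseteq> P1 \<union> P2"
  proof
    fix z assume z: "z \<in> P"
    obtain Y Y' where ze: "z = (Y,Y')" by (cases z)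
    have Y: "Y \<subseteq> X" "card Y = m" "Y' \<subseteq> X - Y" "card Y' = m"
      using z unfolding ze P_def Ms_def Sub_def by simp_all
    show "z \<in> P1 \<union> P2"
    proof (cases "Y \<in> Bad1")
      case True
      hence "z \<in> P1" unfolding ze P1_def using Y unfolding Sub_def by simp
      thus ?thesis by simp
    next
      case False
      hence "Y' \<in> Bad2" using na Y by blast
      moreover have "Y \<subseteq> X - Y'" using Y by blast
      ultimately have "(Y',Y) \<in> (SIGMA Y:Bad2. Sub Y)" unfolding Sub_def using Y by simp
      hence "(\<lambda>(a,b). (b,a)) (Y',Y) \<in> P2" unfolding P2_def by (rule imageI)
      thus ?thesis unfolding ze by simp
    qed
  qed
  have finP12: "finite (P1 \<union> P2)" unfolding P1_def P2_def using finB1 finB2 finSub by auto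
  have "card P \<le> card (P1 \<union> P2)" by (rule card_mono[OF finP12 sub])
  also have "\<dots> \<le> card P1 + card P2" by (rule card_Un_le)
  also have "\<dots> \<le> (card Bad1 + card Bad2) * ((N - m) choose m)" using cP1 cP2 by (simp add: add_mult_distrib)
  finally have le: "(N choose m) * ((N - m) choose m) \<le> (card Bad1 + card Bad2) * ((N - m) choose m)"
    using cP by simp
  have "0 < (N - m) choose m" using m by (intro zero_less_binomial) linarith
  hence "(card Bad1 + card Bad2) * ((N - m) choose m) < (N choose m) * ((N - m) choose m)"
    using lt by simp
  thus False using le by linarith
qed

theorem corollary2p7:
  fixes n N :: nat and r :: real and \<G>1 \<G>2 :: "nat set set"
  assumes "0 < n" and "n \<le> N" and "0 < r"
    and "\<G>1 \<noteq> {}" and "\<G>2 \<noteq> {}"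
    and "\<forall>G\<in>\<G>1. G \<subseteq> {1..N} \<and> card G \<le> n"
    and "\<forall>G\<in>\<G>2. G \<subseteq> {1..N} \<and> card G \<le> n"
    and "r_spread N r \<G>1" and "r_spread N r \<G>2"
    and "r \<ge> 2 ^ 12 * log 2 (2 * real n)"
  shows "\<exists>G1\<in>\<G>1. \<exists>G2\<in>\<G>2. G1 \<inter> G2 = {}"
proof (cases "{} \<in> \<G>1 \<or> {} \<in> \<G>2")
  case True
  then show ?thesis using assms(4,5) by blast
next
  case False
  note n = assms(1) and nN = assms(2) and r0 = assms(3)
  have sub1: "\<forall>G\<in>\<G>1. G \<subseteq> {1..N}" and sub2: "\<forall>G\<in>\<G>2. G \<subseteq> {1..N}" using assms(6,7) by auto
  have sp1: "spr r \<G>1 (\<lambda>G. G)" by (rule spr_of_r_spread[OF assms(8) sub1 r0])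
  have sp2: "spr r \<G>2 (\<lambda>G. G)" by (rule spr_of_r_spread[OF assms(9) sub2 r0])
  have "log 2 2 \<le> log 2 (2 * real n)" using n by (intro log_mono) auto
  hence lg1: "1 \<le> log 2 (2 * real n)" by simp
  have r4096: "r \<ge> 4096" using assms(10) lg1 by simp
  have sz: "3 * card G \<le> N" if "G \<in> \<G>1 \<union> \<G>2" for G
    using that size_bound[OF sp1 sub1 _ , of G] size_bound[OF sp2 sub2 _, of G] r4096 by auto
  define U where "U = \<G>1 \<union> \<G>2"
  have finU: "finite U" unfolding U_def
    by (rule finite_subset[of _ "Pow {1..N}"]) (use sub1 sub2 in auto)
  have Une: "U \<noteq> {}" unfolding U_def using assms(4) by simp
  define k where "k = Max (card ` U)"
  have kge: "card G \<le> k" if "G \<in> U" for G unfolding k_def using finU that by simp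
  have kin: "k \<in> card ` U" unfolding k_def using finU Une by (intro Max_in) auto
  then obtain G0 where G0: "G0 \<in> U" "k = card G0" by blast
  have kn: "k \<le> n" using G0 assms(6,7) unfolding U_def by auto
  have k3: "3 * k \<le> N" using G0 sz unfolding U_def by auto
  have k1: "k \<ge> 1"
  proof -
    have "G0 \<noteq> {}" using G0(1) False unfolding U_def by auto
    moreover have "finite G0" using G0(1) sub1 sub2 unfolding U_def by (meson UnE finite_atLeastAtMost finite_subset)
    ultimately show ?thesis using G0(2) by (simp add: Suc_leI card_gt_0_iff)
  qed
  define L where "L = (LEAST L. k < 2^L)"
  have kL: "k < 2^L" unfolding L_def by (rule LeastI[of _ k]) (rule less_exp)
  have L0: "L \<ge> 1"
  proof (rule ccontr)
    assume "\<not> L \<ge> 1" hence "L = 0" by simp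
    thus False using kL k1 by simp
  qed
  have kL2: "2^(L-1) \<le> k"
  proof -
    have "\<not> k < 2^(L-1)" unfolding L_def by (rule not_less_Least) (use L0 L_def in simp)
    thus ?thesis by simp
  qed
  have Lk: "L \<le> k"
  proof -
    have "L - 1 < 2^(L-1)" by (rule less_exp)
    thus ?thesis using kL2 L0 by linarith
  qed
  have "(2::real)^L \<le> 2 * real n"
  proof -
    have "(2::nat)^L = 2 * 2^(L-1)" using L0 by (metis Suc_diff_1 less_le_trans power_Suc zero_less_one)
    also have "\<dots> \<le> 2 * n" using kL2 kn by simp
    finally have "(2::nat)^L \<le> 2*n" .
    thus ?thesis by (metis of_nat_le_iff of_nat_mult of_nat_numeral of_nat_power)
  qed
  hence "log 2 ((2::real)^L) \<le> log 2 (2 * real n)" by (intro log_mono) auto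
  hence "real L \<le> log 2 (2 * real n)" by simp
  hence rL: "r \<ge> 4096 * real L" using assms(10) by simp
  have N0: "N > 0" using n nN by simp
  define x where "x = 32 * real N / r"
  have x0: "x \<ge> 0" unfolding x_def using r0 by simp
  define w where "w = nat \<lfloor>x\<rfloor> + 1"
  have wx: "real w = of_int \<lfloor>x\<rfloor> + 1" unfolding w_def using x0 by simp
  have w1: "w \<ge> 1" unfolding w_def by simp
  have wgt: "real w > x" using wx by linarith
  have wle: "real w \<le> x + 1" using wx by linarith
  define q where "q = 4 * real N / (real w * r)"
  have "32 * real N < real w * r" using wgt r0 unfolding x_def by (simp add: field_simps)
  hence q8: "q < 1/8" unfolding q_def using r0 w1 by (simp add: field_simps)
  have q0: "q \<ge> 0" unfolding q_def using r0 by simp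
  define m where "m = L * w"
  have m2: "2 * m \<le> N"
  proof -
    have "real (2*m) = 2 * real L * real w" unfolding m_def by simp
    also have "\<dots> \<le> 2 * real L * (x + 1)" using wle L0 by (intro mult_left_mono) auto
    also have "\<dots> = 64 * real L * real N / r + 2 * real L" unfolding x_def by (simp add: field_simps)
    also have "64 * real L * real N / r \<le> real N / 64"
    proof -
      have "64 * real L * real N * 64 \<le> r * real N" using mult_right_mono[OF rL, of "real N"] by (simp add: algebra_simps)
      thus ?thesis using r0 by (simp add: field_simps)
    qed
    finally have "real (2*m) \<le> real N / 64 + 2 * real L" by linarith
    moreover have "real L \<le> real k" using Lk by simp
    moreover have "3 * real k \<le> real N" using k3 by (metis of_nat_le_iff of_nat_mult of_nat_numeral)
    ultimately have "real (2*m) \<le> real N" by linarith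
    thus ?thesis by simp
  qed
  have szL1: "\<forall>G\<in>\<G>1. card G < 2^L" using kge kL unfolding U_def by (meson UnI1 le_less_trans)
  have szL2: "\<forall>G\<in>\<G>2. card G < 2^L" using kge kL unfolding U_def by (meson UnI2 le_less_trans)
  define Bad1 where "Bad1 = {Y. Y \<subseteq> {1..N} \<and> card Y = L*w \<and> \<not>(\<exists>G\<in>\<G>1. G \<subseteq> Y)}"
  define Bad2 where "Bad2 = {Y. Y \<subseteq> {1..N} \<and> card Y = L*w \<and> \<not>(\<exists>G\<in>\<G>2. G \<subseteq> Y)}"
  have q2: "q \<le> 1/2" using q8 by simp
  have b1: "real (card Bad1) \<le> 4*q * real (N choose (L*w))" unfolding Bad1_def
    by (rule few_bad[OF sp1 sub1 assms(4) szL1 r0 w1 q_def q2])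
  have b2: "real (card Bad2) \<le> 4*q * real (N choose (L*w))" unfolding Bad2_def
    by (rule few_bad[OF sp2 sub2 assms(5) szL2 r0 w1 q_def q2])
  have "0 < N choose m" using m2 by (intro zero_less_binomial) linarith
  hence Cp: "0 < real (N choose m)" by simp
  have "(8*q) * real (N choose m) < 1 * real (N choose m)"
    using q8 Cp by (intro mult_strict_right_mono) auto
  hence "real (card Bad1) + real (card Bad2) < real (N choose m)"
    using b1 b2 unfolding m_def by linarith
  hence lt: "card Bad1 + card Bad2 < N choose m" by linarith
  have "\<exists>Y Y'. Y \<subseteq> {1..N} \<and> card Y = m \<and> Y' \<subseteq> {1..N} - Y \<and> card Y' = m \<and> Y \<notin> Bad1 \<and> Y' \<notin> Bad2"
  proof (rule pair_count[OF _ _ m2 _ _ lt])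
    show "Bad1 \<subseteq> {Y. Y \<subseteq> {1..N} \<and> card Y = m}" unfolding Bad1_def m_def by (rule Collect_mono) simp
    show "Bad2 \<subseteq> {Y. Y \<subseteq> {1..N} \<and> card Y = m}" unfolding Bad2_def m_def by (rule Collect_mono) simp
  qed simp_all
  then obtain Y Y' where YY: "Y \<subseteq> {1..N}" "card Y = m" "Y' \<subseteq> {1..N} - Y" "card Y' = m" "Y \<notin> Bad1" "Y' \<notin> Bad2"
    by blast
  have "\<exists>G\<in>\<G>1. G \<subseteq> Y" using YY(1,2,5) unfolding Bad1_def m_def by simp
  then obtain G1 where G1: "G1 \<in> \<G>1" "G1 \<subseteq> Y" by blast
  have "Y' \<subseteq> {1..N}" using YY(3) by blast
  hence "\<exists>G\<in>\<G>2. G \<subseteq> Y'" using YY(4,6) unfolding Bad2_def m_def by simp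
  then obtain G2 where G2: "G2 \<in> \<G>2" "G2 \<subseteq> Y'" by blast
  have "G1 \<inter> G2 = {}" using G1(2) G2(2) YY(3) by blast
  thus ?thesis using G1(1) G2(1) by blast
qed

end
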